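(* Let $b\ge2$ be an integer, $\lambda\in(1/b,1)$, and let $\phi$ be a $\mathbb{Z}$-periodic Lipschitz function such that $W=W^\phi_{\lambda,b}$ is not Lipschitz. Then every $C^2$-regulating period of $W$ is a rational number.
   Context: $W^\phi_{\lambda,b}(x)=\sum_{n\ge0}\lambda^n\phi(b^nx)$. For $k\in\mathbb{Z}_+$, $t\in\mathbb{R}$ is a $C^k$-regulating period of $W$ if $x\mapsto W(x+t)-W(x)$ is a $C^k$ function. *)

theory Defs
  imports "HOL-Analysis.Analysis"
begin

definition weierstrass_fun :: "(real \<Rightarrow> real) \<Rightarrow> real \<Rightarrow> nat \<Rightarrow> real \<Rightarrow> real" where
  "weierstrass_fun \<phi> lam b x = (\<Sum>n. lam ^ n * \<phi> (real b ^ n * x))"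

definition C_k :: "nat \<Rightarrow> (real \<Rightarrow> real) \<Rightarrow> bool" where
  "C_k k f \<longleftrightarrow> (\<exists>D :: nat \<Rightarrow> real \<Rightarrow> real. D 0 = f \<and>
      (\<forall>i<k. \<forall>x. (D i has_real_derivative D (Suc i) x) (at x)) \<and>
      continuous_on UNIV (D k))"

definition regulating_period :: "nat \<Rightarrow> (real \<Rightarrow> real) \<Rightarrow> real \<Rightarrow> bool" where
  "regulating_period k W t \<longleftrightarrow> C_k k (\<lambda>x. W (x + t) - W x)"

end

theory Submission
  imports Defs
begin


lemma per_nat:
  assumes "\<forall>x. f (x+1) = (f x :: real)"
  shows "f (x + real k) = f x"
proof (induction k arbitrary: x)
  case 0 then show ?case by simp
next
  case (Suc k)
  have "f (x + real (Suc k)) = f ((x + real k) + 1)" by (simp add: algebra_simps)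
  also have "\<dots> = f (x + real k)" by (rule assms[rule_format])
  finally show ?case using Suc by simp
qed

lemma per_int:
  assumes "\<forall>x. f (x+1) = (f x :: real)"
  shows "f (x + real_of_int n) = f x"
proof (cases "n \<ge> 0")
  case True
  then have e: "real_of_int n = real (nat n)" by simp
  show ?thesis unfolding e by (rule per_nat[OF assms])
next
  case False
  then have n: "real_of_int n = - real (nat (-n))" by simp
  have "f x = f ((x - real (nat (-n))) + real (nat (-n)))" by simp
  also have "\<dots> = f (x - real (nat (-n)))" by (rule per_nat[OF assms])
  finally show ?thesis unfolding n by simp
qed

lemma per_osc:
  assumes per: "\<forall>x. f (x+1) = (f x :: real)"
    and lip: "\<forall>x y. \<bar>f x - f y\<bar> \<le> K * \<bar>x - y\<bar>"
  shows "\<bar>f x - f y\<bar> \<le> K"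
proof -
  have K0: "0 \<le> K" using lip[rule_format, of 0 1] by simp
  define x' where "x' = x - of_int \<lfloor>x\<rfloor>"
  define y' where "y' = y - of_int \<lfloor>y\<rfloor>"
  have "f x = f (x' + of_int \<lfloor>x\<rfloor>)" by (simp add: x'_def)
  also have "\<dots> = f x'" by (rule per_int[OF per])
  finally have fx: "f x = f x'" .
  have "f y = f (y' + of_int \<lfloor>y\<rfloor>)" by (simp add: y'_def)
  also have "\<dots> = f y'" by (rule per_int[OF per])
  finally have fy: "f y = f y'" .
  have a: "of_int \<lfloor>x\<rfloor> \<le> x" "x < of_int \<lfloor>x\<rfloor> + 1" "of_int \<lfloor>y\<rfloor> \<le> y" "y < of_int \<lfloor>y\<rfloor> + 1"
    by simp_all
  have "\<bar>x' - y'\<bar> \<le> 1" unfolding x'_def y'_def using a by linarith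
  then have "K * \<bar>x' - y'\<bar> \<le> K" using K0 by (simp add: mult_left_le)
  moreover have "\<bar>f x' - f y'\<bar> \<le> K * \<bar>x' - y'\<bar>" using lip by simp
  ultimately show ?thesis using fx fy by linarith
qed



locale WS =
  fixes \<phi> :: "real \<Rightarrow> real" and lam :: real and b :: nat and Lp :: real
  assumes b2: "b \<ge> 2" and lam_gt: "1 / real b < lam" and lam_lt: "lam < 1"
    and per: "\<forall>x. \<phi> (x + 1) = \<phi> x" and lip: "Lp-lipschitz_on UNIV \<phi>"
begin

lemma bpos: "real b > 0" using b2 by simp
lemma lam_pos: "lam > 0" using lam_gt bpos by (smt (verit) divide_pos_pos)
lemma lb: "lam * real b > 1" using lam_gt bpos by (simp add: field_simps)
lemma Lp0: "Lp \<ge> 0" using lip lipschitz_on_nonneg by blast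

lemma phi_lip: "\<bar>\<phi> x - \<phi> y\<bar> \<le> Lp * \<bar>x - y\<bar>"
  using lipschitz_onD[OF lip, of x y] by (simp add: dist_real_def)

definition "Bp = \<bar>\<phi> 0\<bar> + Lp"

lemma phi_bound: "\<bar>\<phi> x\<bar> \<le> Bp"
  using per_osc[OF per, of Lp x 0] phi_lip unfolding Bp_def by (smt (verit))

abbreviation "W \<equiv> weierstrass_fun \<phi> lam b"

lemma W_term_bound: "norm (lam ^ n * \<phi> (real b ^ n * x)) \<le> Bp * lam ^ n"
  using phi_bound[of "real b ^ n * x"] lam_pos
  by (simp add: abs_mult mult.commute mult_left_mono)

lemma geo_sum: "summable (\<lambda>n. Bp * lam ^ n)"
  using lam_pos lam_lt by (intro summable_mult summable_geometric) simp

lemma W_summable: "summable (\<lambda>n. lam ^ n * \<phi> (real b ^ n * x))"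
  by (rule summable_comparison_test[OF _ geo_sum]) (use W_term_bound in auto)

lemma W_eq: "W x = \<phi> x + lam * W (real b * x)"
proof -
  have "(\<Sum>n. lam ^ Suc n * \<phi> (real b ^ Suc n * x)) = W x - \<phi> x"
    using suminf_split_head[OF W_summable[of x]] by (simp add: weierstrass_fun_def)
  moreover have "(\<Sum>n. lam ^ Suc n * \<phi> (real b ^ Suc n * x)) = lam * W (real b * x)"
    unfolding weierstrass_fun_def
    by (subst suminf_mult[OF W_summable, symmetric]) (simp add: algebra_simps)
  ultimately show ?thesis by simp
qed

lemma W_per: "W (x + 1) = W x"
proof -
  have "\<phi> (real b ^ n * (x + 1)) = \<phi> (real b ^ n * x)" for n
  proof -
    have "\<phi> (real b ^ n * (x + 1)) = \<phi> (real b ^ n * x + real (b ^ n))" by (simp add: algebra_simps)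
    also have "\<dots> = \<phi> (real b ^ n * x)" using per_nat[OF per] by blast
    finally show ?thesis .
  qed
  then show ?thesis by (simp add: weierstrass_fun_def)
qed

lemma W_per_all: "\<forall>x. W (x + 1) = W x" using W_per by blast

lemma phi_cont: "continuous_on UNIV \<phi>"
  using lipschitz_on_continuous_on[OF lip] .

lemma W_cont: "continuous_on UNIV W"
proof -
  have ul: "uniform_limit UNIV (\<lambda>n x. \<Sum>i<n. lam ^ i * \<phi> (real b ^ i * x))
      (\<lambda>x. suminf (\<lambda>i. lam ^ i * \<phi> (real b ^ i * x))) sequentially"
    by (rule Weierstrass_m_test[OF _ geo_sum]) (rule W_term_bound)
  have "continuous_on UNIV (\<lambda>x. \<Sum>i<n. lam ^ i * \<phi> (real b ^ i * x))" for n
    by (intro continuous_intros continuous_on_compose2[OF phi_cont]) auto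
  then have "continuous_on UNIV (\<lambda>x. suminf (\<lambda>i. lam ^ i * \<phi> (real b ^ i * x)))"
    by (intro uniform_limit_theorem[OF _ ul]) auto
  then show ?thesis unfolding weierstrass_fun_def[abs_def] .
qed

lemma W_bound: "\<bar>W x\<bar> \<le> Bp / (1 - lam)"
proof -
  have s: "summable (\<lambda>n. norm (lam ^ n * \<phi> (real b ^ n * x)))"
    by (rule summable_comparison_test'[OF geo_sum]) (use W_term_bound in simp)
  have "\<bar>W x\<bar> \<le> (\<Sum>n. norm (lam ^ n * \<phi> (real b ^ n * x)))"
    using summable_norm[OF s] unfolding weierstrass_fun_def by simp
  also have "\<dots> \<le> (\<Sum>n. Bp * lam ^ n)"
    by (rule suminf_le[OF W_term_bound s geo_sum])
  also have "\<dots> = Bp / (1 - lam)"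
  proof -
    have g: "summable (\<lambda>n. lam ^ n)" using lam_pos lam_lt by (intro summable_geometric) simp
    have "(\<Sum>n. Bp * lam ^ n) = Bp * (\<Sum>n. lam ^ n)" by (rule suminf_mult[OF g])
    also have "(\<Sum>n. lam ^ n) = 1 / (1 - lam)" using lam_pos lam_lt by (intro suminf_geometric) simp
    finally show ?thesis by simp
  qed
  finally show ?thesis .
qed

end


context WS begin

definition Aop :: "(real \<Rightarrow> real) \<Rightarrow> real \<Rightarrow> real" where
  "Aop f x = (\<Sum>k<b. f ((x + real k) / real b)) / real b"

lemma A_lin: "Aop (\<lambda>z. c * f z + (\<Sum>i\<in>S. d i * h i z)) y = c * Aop f y + (\<Sum>i\<in>S. d i * Aop (h i) y)"
proof -
  define p where "p k = (y + real k) / real b" for k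
  have sw: "(\<Sum>k<b. \<Sum>i\<in>S. d i * h i (p k)) = (\<Sum>i\<in>S. d i * (\<Sum>k<b. h i (p k)))"
    by (simp add: sum.swap[of _ S] sum_distrib_left)
  have "Aop (\<lambda>z. c * f z + (\<Sum>i\<in>S. d i * h i z)) y
      = (c * (\<Sum>k<b. f (p k)) + (\<Sum>i\<in>S. d i * (\<Sum>k<b. h i (p k)))) / real b"
    unfolding Aop_def p_def[symmetric] by (simp add: sum.distrib sum_distrib_left sw)
  also have "\<dots> = c * ((\<Sum>k<b. f (p k)) / real b) + (\<Sum>i\<in>S. d i * ((\<Sum>k<b. h i (p k)) / real b))"
    by (simp add: add_divide_distrib sum_divide_distrib[symmetric])
  also have "\<dots> = c * Aop f y + (\<Sum>i\<in>S. d i * Aop (h i) y)"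
    unfolding Aop_def p_def ..
  finally show ?thesis .
qed

lemma A_shift: "Aop (\<lambda>x. f (x + s) - f x) y = Aop f (y + real b * s) - Aop f y"
proof -
  have e: "(y + real k) / real b + s = (y + real b * s + real k) / real b" for k
    using bpos by (simp add: field_simps)
  show ?thesis unfolding Aop_def
    by (simp add: e sum_subtractf diff_divide_distrib)
qed

lemma A_per:
  assumes "\<forall>x. f (x + 1) = f x"
  shows "Aop f (x + 1) = Aop f x"
proof -
  obtain n where bn: "b = Suc n" using b2 by (cases b) auto
  have B: "{..<b} = {..<Suc n}" using bn by simp
  have e1: "(\<Sum>k<b. f ((x + 1 + real k) / real b))
      = (\<Sum>k<n. f ((x + real (Suc k)) / real b)) + f ((x + 1 + real n) / real b)"
    unfolding B by (simp add: sum.lessThan_Suc algebra_simps)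
  have e2: "(\<Sum>k<b. f ((x + real k) / real b))
      = f ((x + real 0) / real b) + (\<Sum>k<n. f ((x + real (Suc k)) / real b))"
    unfolding B by (rule sum.lessThan_Suc_shift)
  have "(x + 1 + real n) / real b = x / real b + 1" using bn bpos by (simp add: field_simps)
  then have "f ((x + 1 + real n) / real b) = f ((x + real 0) / real b)"
    using assms by simp
  then show ?thesis unfolding Aop_def using e1 e2 by simp
qed

lemma A_lip:
  assumes "\<forall>x y. \<bar>f x - f y\<bar> \<le> K * \<bar>x - y\<bar>"
  shows "\<bar>Aop f x - Aop f y\<bar> \<le> K / real b * \<bar>x - y\<bar>"
proof -
  define px where "px k = (x + real k) / real b" for k
  define py where "py k = (y + real k) / real b" for k
  have d: "\<bar>px k - py k\<bar> = \<bar>x - y\<bar> / real b" for k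
    using bpos unfolding px_def py_def by (simp add: diff_divide_distrib[symmetric] abs_divide)
  have "\<bar>Aop f x - Aop f y\<bar> = \<bar>\<Sum>k<b. f (px k) - f (py k)\<bar> / real b"
    unfolding Aop_def px_def py_def using bpos
    by (simp add: sum_subtractf diff_divide_distrib[symmetric] abs_divide)
  also have "\<dots> \<le> (\<Sum>k<b. \<bar>f (px k) - f (py k)\<bar>) / real b"
    using bpos by (intro divide_right_mono sum_abs) simp
  also have "\<dots> \<le> (\<Sum>k<b. K * (\<bar>x - y\<bar> / real b)) / real b"
    using bpos assms d by (intro divide_right_mono sum_mono) (metis order_refl, simp)
  also have "\<dots> = K / real b * \<bar>x - y\<bar>" using bpos by simp
  finally show ?thesis .
qed

lemma Apow_per:
  assumes "\<forall>x. f (x + 1) = f x"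
  shows "\<forall>x. (Aop ^^ m) f (x + 1) = (Aop ^^ m) f x"
proof (induction m)
  case 0 then show ?case using assms by simp
next
  case (Suc m) then show ?case using A_per by simp
qed

lemma Apow_lip:
  assumes "\<forall>x y. \<bar>f x - f y\<bar> \<le> K * \<bar>x - y\<bar>"
  shows "\<forall>x y. \<bar>(Aop ^^ m) f x - (Aop ^^ m) f y\<bar> \<le> K / real b ^ m * \<bar>x - y\<bar>"
proof (induction m)
  case 0 then show ?case using assms by simp
next
  case (Suc m)
  have "\<bar>Aop ((Aop ^^ m) f) x - Aop ((Aop ^^ m) f) y\<bar> \<le> K / real b ^ m / real b * \<bar>x - y\<bar>" for x y
    by (rule A_lip[OF Suc])
  then show ?case by (simp add: mult.commute)
qed

lemma Apow_shift:
  "(Aop ^^ m) (\<lambda>x. f (x + s) - f x) = (\<lambda>y. (Aop ^^ m) f (y + real b ^ m * s) - (Aop ^^ m) f y)"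
proof (induction m)
  case 0 then show ?case by simp
next
  case (Suc m)
  have "(Aop ^^ Suc m) (\<lambda>x. f (x + s) - f x) = Aop ((Aop ^^ m) (\<lambda>x. f (x + s) - f x))" by simp
  also have "\<dots> = Aop (\<lambda>y. (Aop ^^ m) f (y + real b ^ m * s) - (Aop ^^ m) f y)" by (simp only: Suc)
  also have "\<dots> = (\<lambda>y. Aop ((Aop ^^ m) f) (y + real b * (real b ^ m * s)) - Aop ((Aop ^^ m) f) y)"
    by (rule ext) (rule A_shift)
  finally show ?case by (simp add: mult.assoc)
qed

lemma A_W: "Aop W y = Aop \<phi> y + lam * W y"
proof -
  have "W ((y + real k) / real b) = \<phi> ((y + real k) / real b) + lam * W y" for k
  proof -
    have "W ((y + real k) / real b) = \<phi> ((y + real k) / real b) + lam * W (real b * ((y + real k) / real b))"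
      by (rule W_eq)
    also have "real b * ((y + real k) / real b) = y + real k" using bpos by simp
    also have "W (y + real k) = W y" by (rule per_nat[OF W_per_all])
    finally show ?thesis .
  qed
  then have "Aop W y = (\<Sum>k<b. \<phi> ((y + real k) / real b) + lam * W y) / real b"
    unfolding Aop_def by simp
  also have "\<dots> = Aop \<phi> y + lam * W y"
    unfolding Aop_def using bpos by (simp add: sum.distrib add_divide_distrib)
  finally show ?thesis .
qed

lemma I1: "(Aop ^^ m) W y = lam ^ m * W y + (\<Sum>i<m. lam ^ (m - Suc i) * (Aop ^^ Suc i) \<phi> y)"
proof (induction m arbitrary: y)
  case 0 then show ?case by simp
next
  case (Suc m)
  have F: "(Aop ^^ m) W = (\<lambda>z. lam ^ m * W z + (\<Sum>i<m. lam ^ (m - Suc i) * (Aop ^^ Suc i) \<phi> z))"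
    by (rule ext) (rule Suc)
  have "(Aop ^^ Suc m) W y = Aop ((Aop ^^ m) W) y" by simp
  also have "\<dots> = lam ^ m * Aop W y + (\<Sum>i<m. lam ^ (m - Suc i) * Aop ((Aop ^^ Suc i) \<phi>) y)"
    unfolding F by (rule A_lin)
  also have "\<dots> = lam ^ m * (Aop \<phi> y + lam * W y) + (\<Sum>i<m. lam ^ (m - Suc i) * (Aop ^^ Suc (Suc i)) \<phi> y)"
    by (simp add: A_W)
  also have "\<dots> = lam ^ Suc m * W y + (\<Sum>i<Suc m. lam ^ (Suc m - Suc i) * (Aop ^^ Suc i) \<phi> y)"
    by (simp only: sum.lessThan_Suc_shift diff_Suc_Suc diff_zero) (simp add: algebra_simps)
  finally show ?case .
qed

end


lemma abs_suminf_le: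
  fixes f g :: "nat \<Rightarrow> real"
  assumes "\<And>n. \<bar>f n\<bar> \<le> g n" "summable g"
  shows "summable f" "\<bar>suminf f\<bar> \<le> suminf g"
proof -
  have s: "summable (\<lambda>n. norm (f n))"
    by (rule summable_comparison_test'[OF assms(2)]) (use assms(1) in simp)
  show "summable f" by (rule summable_comparison_test'[OF assms(2)]) (use assms(1) in simp)
  have "\<bar>suminf f\<bar> \<le> (\<Sum>n. norm (f n))" using summable_norm[OF s] by simp
  also have "\<dots> \<le> suminf g" by (rule suminf_le[OF _ s assms(2)]) (use assms(1) in simp)
  finally show "\<bar>suminf f\<bar> \<le> suminf g" .
qed

lemma alg1:
  fixes L w w' :: real
  shows "(L * w + (\<Sum>i\<in>S. c i * a i)) - (L * w' + (\<Sum>i\<in>S. c i * a' i))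
     = L * (w - w') + (\<Sum>i\<in>S. c i * (a i - a' i))"
  by (simp add: sum_subtractf[symmetric] right_diff_distrib)

lemma alg2: "(l::real) > 0 \<Longrightarrow> (l * X + S) / l = X + S / l"
  by (simp add: field_simps)

lemma near_const:
  fixes U :: "real \<Rightarrow> real"
  assumes B: "\<forall>y. \<bar>U y\<bar> \<le> B" and D: "\<forall>y. \<bar>U (y + s) - U y - \<kappa>\<bar> \<le> \<rho>"
  shows "\<bar>\<kappa>\<bar> \<le> \<rho>"
proof (rule ccontr)
  assume "\<not> \<bar>\<kappa>\<bar> \<le> \<rho>"
  then have gt: "\<bar>\<kappa>\<bar> - \<rho> > 0" by simp
  have ind: "\<bar>U (real n * s) - U 0 - real n * \<kappa>\<bar> \<le> real n * \<rho>" for n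
  proof (induction n)
    case 0 then show ?case by simp
  next
    case (Suc n)
    have "\<bar>U (real n * s + s) - U (real n * s) - \<kappa>\<bar> \<le> \<rho>" using D by blast
    moreover have "real (Suc n) * s = real n * s + s" by (simp add: algebra_simps)
    ultimately show ?case using Suc by (simp add: algebra_simps)
  qed
  obtain n :: nat where n: "2 * B / (\<bar>\<kappa>\<bar> - \<rho>) < real n" using reals_Archimedean2[of "2 * B / (\<bar>\<kappa>\<bar> - \<rho>)"] by auto
  have "real n * \<bar>\<kappa>\<bar> \<le> \<bar>U (real n * s) - U 0\<bar> + real n * \<rho>"
  proof -
    have a: "real n * \<bar>\<kappa>\<bar> = \<bar>real n * \<kappa>\<bar>" by (simp add: abs_mult)
    show ?thesis using ind[of n] unfolding a by arith
  qed
  also have "\<bar>U (real n * s) - U 0\<bar> \<le> 2 * B" using B[rule_format, of "real n * s"] B[rule_format, of 0] by linarith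
  finally have "real n * (\<bar>\<kappa>\<bar> - \<rho>) \<le> 2 * B" by (simp add: algebra_simps)
  then have "real n \<le> 2 * B / (\<bar>\<kappa>\<bar> - \<rho>)" using gt by (simp add: field_simps)
  then show False using n by simp
qed

context WS begin

abbreviation "Ai i \<equiv> (Aop ^^ i) \<phi>"

definition "r = 1 / (lam * real b)"
lemma r_pos: "r > 0" unfolding r_def using lam_pos bpos by simp
lemma r_lt1: "r < 1" unfolding r_def using lb by simp

lemma Ai_per: "\<forall>x. Ai i (x + 1) = Ai i x" by (rule Apow_per[OF per])
lemma Ai_lip: "\<forall>x y. \<bar>Ai i x - Ai i y\<bar> \<le> Lp / real b ^ i * \<bar>x - y\<bar>"
  by (rule Apow_lip) (use phi_lip in blast)
lemma Ai_osc: "\<bar>Ai i x - Ai i y\<bar> \<le> Lp / real b ^ i"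
  by (rule per_osc[OF Ai_per Ai_lip])

lemma coef: "(1 / lam) ^ n * (Lp / real b ^ n) = Lp * r ^ n"
  unfolding r_def by (simp add: power_one_over power_mult_distrib)

definition "dterm x y i = (1 / lam) ^ Suc i * (Ai (Suc i) x - Ai (Suc i) y)"

lemma dterm_b1: "\<bar>dterm x y i\<bar> \<le> Lp * r ^ Suc i"
proof -
  have "\<bar>dterm x y i\<bar> = (1 / lam) ^ Suc i * \<bar>Ai (Suc i) x - Ai (Suc i) y\<bar>"
    unfolding dterm_def using lam_pos by (simp add: abs_mult)
  also have "\<dots> \<le> (1 / lam) ^ Suc i * (Lp / real b ^ Suc i)"
    using lam_pos by (intro mult_left_mono Ai_osc) simp
  also have "\<dots> = Lp * r ^ Suc i" by (rule coef)
  finally show ?thesis .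
qed

lemma dterm_b2: "\<bar>dterm x y i\<bar> \<le> Lp * r ^ Suc i * \<bar>x - y\<bar>"
proof -
  have "\<bar>dterm x y i\<bar> = (1 / lam) ^ Suc i * \<bar>Ai (Suc i) x - Ai (Suc i) y\<bar>"
    unfolding dterm_def using lam_pos by (simp add: abs_mult)
  also have "\<dots> \<le> (1 / lam) ^ Suc i * (Lp / real b ^ Suc i * \<bar>x - y\<bar>)"
    by (intro mult_left_mono Ai_lip[rule_format]) (use lam_pos in simp)
  also have "\<dots> = Lp * r ^ Suc i * \<bar>x - y\<bar>" by (simp only: mult.assoc[symmetric] coef)
  finally show ?thesis .
qed

lemma geo_r: "summable (\<lambda>i. Lp * r ^ Suc i)"
  using r_pos r_lt1 by (intro summable_mult summable_geometric summable_Suc_iff[THEN iffD2]) simp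

definition "LR = (\<Sum>i. Lp * r ^ Suc i)"

lemma LR0: "LR \<ge> 0" unfolding LR_def using Lp0 r_pos by (intro suminf_nonneg geo_r) simp

lemma dterm_summable: "summable (dterm x y)"
  by (rule abs_suminf_le(1)[OF dterm_b1 geo_r])

definition "Rf y = suminf (dterm y 0)"

lemma R_diff: "Rf x - Rf y = suminf (dterm x y)"
proof -
  have "Rf x - Rf y = (\<Sum>i. dterm x 0 i - dterm y 0 i)"
    unfolding Rf_def by (rule suminf_diff[OF dterm_summable dterm_summable])
  also have "(\<lambda>i. dterm x 0 i - dterm y 0 i) = dterm x y"
    by (rule ext) (simp add: dterm_def algebra_simps)
  finally show ?thesis .
qed

lemma R_lip: "\<bar>Rf x - Rf y\<bar> \<le> LR * \<bar>x - y\<bar>"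
proof -
  have s: "summable (\<lambda>i. Lp * r ^ Suc i * \<bar>x - y\<bar>)" by (rule summable_mult2[OF geo_r])
  have "\<bar>Rf x - Rf y\<bar> \<le> (\<Sum>i. Lp * r ^ Suc i * \<bar>x - y\<bar>)"
    unfolding R_diff by (rule abs_suminf_le(2)[OF dterm_b2 s])
  also have "\<dots> = LR * \<bar>x - y\<bar>" unfolding LR_def by (rule suminf_mult2[OF geo_r, symmetric])
  finally show ?thesis .
qed

lemma R_per: "Rf (x + 1) = Rf x"
proof -
  have "dterm (x + 1) x = (\<lambda>_. 0)" by (rule ext) (simp only: dterm_def Ai_per[rule_format] diff_self mult_zero_right)
  then have "Rf (x + 1) - Rf x = 0" unfolding R_diff by simp
  then show ?thesis by simp
qed

definition "U y = W y + Rf y"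

lemma U_per: "U (x + 1) = U x" unfolding U_def by (simp add: W_per R_per)

lemma R_cont: "continuous_on UNIV Rf"
proof -
  have "LR-lipschitz_on UNIV Rf"
    by (rule lipschitz_onI) (use R_lip LR0 in \<open>simp_all add: dist_real_def\<close>)
  then show ?thesis by (rule lipschitz_on_continuous_on)
qed

lemma U_cont: "continuous_on UNIV U"
  unfolding U_def[abs_def] by (intro continuous_on_add W_cont R_cont)

definition "BU = Bp / (1 - lam) + \<bar>Rf 0\<bar> + LR"

lemma U_bound: "\<bar>U y\<bar> \<le> BU"
proof -
  have "\<bar>Rf y - Rf 0\<bar> \<le> LR" by (rule per_osc) (use R_per R_lip in auto)
  then show ?thesis using W_bound[of y] unfolding U_def BU_def by linarith
qed

lemma main_est:
  assumes glip: "\<forall>x y. \<bar>(W (x + t) - W x) - (W (y + t) - W y)\<bar> \<le> K * \<bar>x - y\<bar>"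
  shows "\<bar>U (y + real b ^ m * t) - U y\<bar> \<le> 2 * ((K + 2 * LR) * r ^ m)"
proof -
  define s where "s = real b ^ m * t"
  define g where "g x = W (x + t) - W x" for x
  define G where "G y = (Aop ^^ m) g y / lam ^ m" for y
  have lm: "lam ^ m > 0" using lam_pos by simp
  have Geq: "G y = (W (y + s) - W y) + (\<Sum>i<m. dterm (y + s) y i)" for y
  proof -
    have "(Aop ^^ m) g y = (Aop ^^ m) W (y + s) - (Aop ^^ m) W y"
      unfolding g_def s_def by (subst Apow_shift) simp
    also have "\<dots> = lam ^ m * (W (y + s) - W y) + (\<Sum>i<m. lam ^ (m - Suc i) * (Ai (Suc i) (y + s) - Ai (Suc i) y))"
      unfolding I1 by (rule alg1)
    finally have "G y = (lam ^ m * (W (y + s) - W y) + (\<Sum>i<m. lam ^ (m - Suc i) * (Ai (Suc i) (y + s) - Ai (Suc i) y))) / lam ^ m"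
      unfolding G_def by (rule arg_cong[where f="\<lambda>z. z / lam ^ m"])
    also have "\<dots> = (W (y + s) - W y) + (\<Sum>i<m. lam ^ (m - Suc i) * (Ai (Suc i) (y + s) - Ai (Suc i) y)) / lam ^ m"
      using lm by (rule alg2)
    also have "(\<Sum>i<m. lam ^ (m - Suc i) * (Ai (Suc i) (y + s) - Ai (Suc i) y)) / lam ^ m
        = (\<Sum>i<m. dterm (y + s) y i)"
      unfolding sum_divide_distrib
    proof (rule sum.cong[OF refl])
      fix i assume "i \<in> {..<m}"
      then have "m = (m - Suc i) + Suc i" by simp
      then have "lam ^ m = lam ^ (m - Suc i) * lam ^ Suc i" by (metis power_add)
      then show "lam ^ (m - Suc i) * (Ai (Suc i) (y + s) - Ai (Suc i) y) / lam ^ m = dterm (y + s) y i"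
        unfolding dterm_def using lam_pos by (simp add: power_one_over field_simps)
    qed
    finally show ?thesis .
  qed
  have Tb: "\<bar>U (y + s) - U y - G y\<bar> \<le> LR * r ^ m" for y
  proof -
    have "U (y + s) - U y - G y = suminf (dterm (y + s) y) - (\<Sum>i<m. dterm (y + s) y i)"
      unfolding Geq U_def using R_diff[of "y + s" y] by simp
    also have "\<dots> = (\<Sum>i. dterm (y + s) y (i + m))"
      using suminf_split_initial_segment[OF dterm_summable, of "y + s" y m] by simp
    finally have e: "U (y + s) - U y - G y = (\<Sum>i. dterm (y + s) y (i + m))" .
    have s2: "summable (\<lambda>i. Lp * r ^ Suc i * r ^ m)" by (rule summable_mult2[OF geo_r])
    have "\<bar>\<Sum>i. dterm (y + s) y (i + m)\<bar> \<le> (\<Sum>i. Lp * r ^ Suc i * r ^ m)"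
    proof (rule abs_suminf_le(2)[OF _ s2])
      fix i
      have "\<bar>dterm (y + s) y (i + m)\<bar> \<le> Lp * r ^ Suc (i + m)" by (rule dterm_b1)
      also have "\<dots> = Lp * r ^ Suc i * r ^ m" by (simp add: power_add)
      finally show "\<bar>dterm (y + s) y (i + m)\<bar> \<le> Lp * r ^ Suc i * r ^ m" .
    qed
    also have "\<dots> = LR * r ^ m" unfolding LR_def by (rule suminf_mult2[OF geo_r, symmetric])
    finally show ?thesis using e by simp
  qed
  have gper: "\<forall>x. g (x + 1) = g x"
  proof
    fix x
    have e: "x + 1 + t = (x + t) + 1" by simp
    show "g (x + 1) = g x" unfolding g_def e W_per by (rule refl)
  qed
  have glip': "\<forall>x y. \<bar>g x - g y\<bar> \<le> K * \<bar>x - y\<bar>" using glip unfolding g_def by blast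
  have Gosc: "\<bar>G y - G 0\<bar> \<le> K * r ^ m" for y
  proof -
    have "\<bar>(Aop ^^ m) g y - (Aop ^^ m) g 0\<bar> \<le> K / real b ^ m"
      by (rule per_osc[OF Apow_per[OF gper] Apow_lip[OF glip']])
    then have "\<bar>(Aop ^^ m) g y - (Aop ^^ m) g 0\<bar> / lam ^ m \<le> K / real b ^ m / lam ^ m"
      using lm by (intro divide_right_mono) auto
    moreover have "K / real b ^ m / lam ^ m = K * r ^ m"
      unfolding r_def by (simp add: power_one_over power_mult_distrib field_simps)
    moreover have "\<bar>G y - G 0\<bar> = \<bar>(Aop ^^ m) g y - (Aop ^^ m) g 0\<bar> / lam ^ m"
      unfolding G_def using lm by (simp add: diff_divide_distrib[symmetric] abs_divide)
    ultimately show ?thesis by simp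
  qed
  define \<kappa> where "\<kappa> = U s - U 0"
  have D: "\<forall>y. \<bar>U (y + s) - U y - \<kappa>\<bar> \<le> (K + 2 * LR) * r ^ m"
  proof
    fix y
    have "\<bar>U (y + s) - U y - \<kappa>\<bar> \<le> \<bar>U (y + s) - U y - G y\<bar> + \<bar>G y - G 0\<bar> + \<bar>U (0 + s) - U 0 - G 0\<bar>"
      unfolding \<kappa>_def by simp
    also have "\<dots> \<le> LR * r ^ m + K * r ^ m + LR * r ^ m" by (intro add_mono Tb Gosc)
    finally show "\<bar>U (y + s) - U y - \<kappa>\<bar> \<le> (K + 2 * LR) * r ^ m" by (simp add: algebra_simps)
  qed
  have "\<bar>\<kappa>\<bar> \<le> (K + 2 * LR) * r ^ m" by (rule near_const[OF _ D]) (use U_bound in blast)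
  then show ?thesis using D[rule_format, of y] unfolding s_def by linarith
qed

end


definition isP :: "(real \<Rightarrow> real) \<Rightarrow> real \<Rightarrow> bool" where
  "isP U p \<longleftrightarrow> (\<forall>y. U (y + p) = U y)"

lemma isP_add: "isP U p \<Longrightarrow> isP U q \<Longrightarrow> isP U (p + q)"
  unfolding isP_def by (metis add.assoc)

lemma isP_diff: "isP U p \<Longrightarrow> isP U q \<Longrightarrow> isP U (p - q)"
  unfolding isP_def by (metis diff_add_cancel add_diff_eq)

lemma isP_0: "isP U 0" unfolding isP_def by simp

lemma isP_int: "\<forall>x. U (x + 1) = U x \<Longrightarrow> isP U (of_int n)"
  unfolding isP_def using per_int by blast

lemma isP_nat_mult: "isP U p \<Longrightarrow> isP U (real k * p)"
proof (induction k)
  case 0 then show ?case by (simp add: isP_0)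
next
  case (Suc k)
  have "real (Suc k) * p = real k * p + p" by (simp add: algebra_simps)
  then show ?case using isP_add[OF Suc.IH[OF Suc.prems] Suc.prems] by simp
qed

lemma isP_int_mult: "isP U p \<Longrightarrow> isP U (of_int n * p)"
proof (cases "n \<ge> 0")
  case True
  assume p: "isP U p"
  have e: "(of_int n :: real) = real (nat n)" using True by simp
  show ?thesis unfolding e by (rule isP_nat_mult[OF p])
next
  case False
  assume p: "isP U p"
  have e: "of_int n * p = 0 - real (nat (-n)) * p" using False by simp
  show ?thesis unfolding e by (rule isP_diff[OF isP_0 isP_nat_mult[OF p]])
qed

lemma period_rat:
  assumes per: "\<forall>x. U (x + 1) = U x" and eps: "\<epsilon> > 0"
    and sep: "\<forall>p. isP U p \<longrightarrow> p \<noteq> 0 \<longrightarrow> \<epsilon> \<le> \<bar>p\<bar>"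
    and P: "isP U p"
  shows "p \<in> \<rat>"
proof (rule ccontr)
  assume nr: "p \<notin> \<rat>"
  define N :: nat where "N = nat \<lceil>1 / \<epsilon>\<rceil> + 1"
  have N1: "N \<ge> 1" unfolding N_def by simp
  have Ne: "1 / real N < \<epsilon>"
  proof -
    have "1 / \<epsilon> < real N" unfolding N_def by linarith
    then show ?thesis using eps N1 by (simp add: field_simps)
  qed
  define q where "q k = real k * p - of_int \<lfloor>real k * p\<rfloor>" for k :: nat
  have q01: "0 \<le> q k" "q k < 1" for k unfolding q_def by (simp_all, linarith)
  define f where "f k = nat \<lfloor>q k * real N\<rfloor>" for k
  have fr: "f ` {0..N} \<subseteq> {0..<N}"
  proof
    fix z assume "z \<in> f ` {0..N}"
    then obtain k where z: "z = f k" by auto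
    have "q k * real N < real N" using q01[of k] N1 by simp
    then have "\<lfloor>q k * real N\<rfloor> < int N" by (simp add: floor_less_iff)
    moreover have "0 \<le> \<lfloor>q k * real N\<rfloor>" using q01[of k] by simp
    ultimately show "z \<in> {0..<N}" unfolding z f_def by (simp add: nat_less_iff)
  qed
  have "card (f ` {0..N}) \<le> card {0..<N}" by (rule card_mono[OF _ fr]) simp
  then have "card (f ` {0..N}) < card {0..N}" by simp
  then have "\<not> inj_on f {0..N}" by (rule pigeonhole)
  then obtain k k' where kk: "k \<noteq> k'" "f k = f k'" unfolding inj_on_def by blast
  have nn: "0 \<le> \<lfloor>q k * real N\<rfloor>" "0 \<le> \<lfloor>q k' * real N\<rfloor>" using q01 by simp_all
  have fl: "\<lfloor>q k * real N\<rfloor> = \<lfloor>q k' * real N\<rfloor>"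
    using eq_nat_nat_iff[OF nn] kk(2) unfolding f_def by blast
  have "\<bar>q k * real N - q k' * real N\<bar> < 1"
    using fl floor_correct[of "q k * real N"] floor_correct[of "q k' * real N"] by linarith
  then have "\<bar>q k - q k'\<bar> * real N < 1" by (simp add: left_diff_distrib[symmetric] abs_mult)
  then have dsmall: "\<bar>q k - q k'\<bar> < 1 / real N" using N1 by (simp add: field_simps)
  have isd: "isP U (q k - q k')"
  proof -
    have e: "q k - q k' = (real k * p - real k' * p) + of_int (\<lfloor>real k' * p\<rfloor> - \<lfloor>real k * p\<rfloor>)"
      unfolding q_def by simp
    show ?thesis unfolding e
      by (intro isP_add isP_diff isP_nat_mult P isP_int per)
  qed
  have "q k - q k' \<noteq> 0"
  proof
    assume "q k - q k' = 0"
    then have "(real k - real k') * p = of_int (\<lfloor>real k * p\<rfloor> - \<lfloor>real k' * p\<rfloor>)"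
      unfolding q_def by (simp add: algebra_simps)
    moreover have "real k - real k' \<noteq> 0" using kk(1) by simp
    ultimately have "p = of_int (\<lfloor>real k * p\<rfloor> - \<lfloor>real k' * p\<rfloor>) / (real k - real k')"
      by (simp add: field_simps)
    also have "\<dots> \<in> \<rat>" by (intro Rats_divide Rats_diff Rats_of_nat Rats_of_int)
    finally show False using nr by simp
  qed
  then have "\<epsilon> \<le> \<bar>q k - q k'\<bar>" using sep isd by blast
  then show False using dsmall Ne by simp
qed

lemma near_period:
  assumes cont: "continuous_on UNIV U" and per: "\<forall>x. U (x + 1) = U x" and e: "\<epsilon>' > 0"
  shows "\<exists>\<eta>>0. \<forall>s. (\<forall>y. \<bar>U (y + s) - U y\<bar> \<le> \<eta>) \<longrightarrow> (\<exists>p. isP U p \<and> \<bar>s - p\<bar> < \<epsilon>')"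
proof (rule ccontr)
  assume "\<not> ?thesis"
  then have H: "\<forall>n. \<exists>s. (\<forall>y. \<bar>U (y + s) - U y\<bar> \<le> inverse (real (Suc n))) \<and> (\<forall>p. isP U p \<longrightarrow> \<epsilon>' \<le> \<bar>s - p\<bar>)"
    by (metis not_le of_nat_0_less_iff positive_imp_inverse_positive zero_less_Suc)
  obtain sq where sq: "\<forall>n. (\<forall>y. \<bar>U (y + sq n) - U y\<bar> \<le> inverse (real (Suc n))) \<and> (\<forall>p. isP U p \<longrightarrow> \<epsilon>' \<le> \<bar>sq n - p\<bar>)"
    using choice[OF H] by blast
  define s' where "s' n = sq n - of_int \<lfloor>sq n\<rfloor>" for n
  have s'01: "s' n \<in> {0..1}" for n unfolding s'_def by (simp, linarith)
  have s'U: "\<bar>U (y + s' n) - U y\<bar> \<le> inverse (real (Suc n))" for y n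
  proof -
    have "U (y + s' n) = U (y + s' n + of_int \<lfloor>sq n\<rfloor>)" using per_int[OF per] by metis
    also have "y + s' n + of_int \<lfloor>sq n\<rfloor> = y + sq n" unfolding s'_def by simp
    finally show ?thesis using sq by simp
  qed
  have s'P: "\<epsilon>' \<le> \<bar>s' n - p\<bar>" if "isP U p" for p n
  proof -
    have "isP U (p + of_int \<lfloor>sq n\<rfloor>)" by (intro isP_add that isP_int per)
    then have "\<epsilon>' \<le> \<bar>sq n - (p + of_int \<lfloor>sq n\<rfloor>)\<bar>" using sq by blast
    then show ?thesis unfolding s'_def by (simp add: algebra_simps)
  qed
  have "seq_compact {0..1::real}" by (rule compact_imp_seq_compact[OF compact_Icc])
  then obtain l \<rho> where l: "l \<in> {0..1}" "strict_mono \<rho>" "(s' \<circ> \<rho>) \<longlonglongrightarrow> l"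
    using s'01 by (metis seq_compactE)
  have ic: "isCont U x" for x using cont continuous_on_eq_continuous_at[OF open_UNIV] by blast
  have "isP U l" unfolding isP_def
  proof
    fix y
    have t1: "(\<lambda>n. U (y + (s' \<circ> \<rho>) n)) \<longlonglongrightarrow> U (y + l)"
      by (rule isCont_tendsto_compose[OF ic]) (intro tendsto_intros l(3))
    then have t2: "(\<lambda>n. \<bar>U (y + (s' \<circ> \<rho>) n) - U y\<bar>) \<longlonglongrightarrow> \<bar>U (y + l) - U y\<bar>"
      by (intro tendsto_intros)
    have "\<bar>U (y + l) - U y\<bar> \<le> 0"
    proof (rule LIMSEQ_le[OF t2 LIMSEQ_inverse_real_of_nat])
      show "\<exists>N. \<forall>n\<ge>N. \<bar>U (y + (s' \<circ> \<rho>) n) - U y\<bar> \<le> inverse (real (Suc n))"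
      proof (intro exI allI impI)
        fix n :: nat
        have "n \<le> \<rho> n" by (rule seq_suble[OF l(2)])
        then have inv: "inverse (real (Suc (\<rho> n))) \<le> inverse (real (Suc n))"
          by (intro le_imp_inverse_le) simp_all
        have a: "\<bar>U (y + s' (\<rho> n)) - U y\<bar> \<le> inverse (real (Suc (\<rho> n)))" by (rule s'U)
        show "\<bar>U (y + (s' \<circ> \<rho>) n) - U y\<bar> \<le> inverse (real (Suc n))"
          unfolding o_apply by (rule order_trans[OF a inv])
      qed
    qed
    then show "U (y + l) = U y" by simp
  qed
  then have "\<forall>n. \<epsilon>' \<le> \<bar>(s' \<circ> \<rho>) n - l\<bar>" using s'P by simp
  moreover obtain n0 where "\<forall>n\<ge>n0. norm ((s' \<circ> \<rho>) n - l) < \<epsilon>'" using LIMSEQ_D[OF l(3) e] by blast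
  ultimately show False by (metis order.refl real_norm_def not_le)
qed

lemma final:
  fixes U :: "real \<Rightarrow> real" and b :: nat
  assumes cont: "continuous_on UNIV U" and per: "\<forall>x. U (x + 1) = U x"
    and eps: "\<epsilon> > 0" and sep: "\<forall>p. isP U p \<longrightarrow> p \<noteq> 0 \<longrightarrow> \<epsilon> \<le> \<bar>p\<bar>"
    and small: "\<forall>m y. \<bar>U (y + real b ^ m * t) - U y\<bar> \<le> C * r ^ m"
    and r: "0 < r" "r < 1" and b: "b \<ge> 2"
  shows "t \<in> \<rat>"
proof -
  define e' where "e' = \<epsilon> / (real b + 2)"
  have e'0: "e' > 0" unfolding e'_def using eps by simp
  have e'b: "(real b + 1) * e' < \<epsilon>" unfolding e'_def using eps by (simp add: field_simps)
  obtain \<eta> where \<eta>: "\<eta> > 0" "\<forall>s. (\<forall>y. \<bar>U (y + s) - U y\<bar> \<le> \<eta>) \<longrightarrow> (\<exists>p. isP U p \<and> \<bar>s - p\<bar> < e')"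
    using near_period[OF cont per e'0] by blast
  obtain M where M: "r ^ M < \<eta> / (\<bar>C\<bar> + 1)"
    using real_arch_pow_inv[of "\<eta> / (\<bar>C\<bar> + 1)" r] \<eta>(1) r by auto
  have sm: "C * r ^ m \<le> \<eta>" if "M \<le> m" for m
  proof -
    have "r ^ m \<le> r ^ M" using that r by (intro power_decreasing) auto
    then have "\<bar>C\<bar> * r ^ m \<le> \<bar>C\<bar> * (\<eta> / (\<bar>C\<bar> + 1))" using M
      by (intro mult_left_mono) auto
    also have "\<dots> \<le> \<eta>" using \<eta>(1) by (simp add: field_simps)
    finally show ?thesis by (smt (verit) abs_ge_self mult_right_mono r(1) zero_le_power)
  qed
  have "\<forall>m. \<exists>p. M \<le> m \<longrightarrow> isP U p \<and> \<bar>real b ^ m * t - p\<bar> < e'"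
  proof
    fix m show "\<exists>p. M \<le> m \<longrightarrow> isP U p \<and> \<bar>real b ^ m * t - p\<bar> < e'"
    proof (cases "M \<le> m")
      case True
      have Y: "\<forall>y. \<bar>U (y + real b ^ m * t) - U y\<bar> \<le> \<eta>" 
        by (intro allI order.trans[OF small[rule_format] sm[OF True]])
      obtain p where p: "isP U p \<and> \<bar>real b ^ m * t - p\<bar> < e'"
        using \<eta>(2)[THEN spec, THEN mp, OF Y] by (elim exE) blast
      show ?thesis by (rule exI[of _ p]) (use p in simp)
    qed simp
  qed
  then have "\<exists>pp. \<forall>m. M \<le> m \<longrightarrow> isP U (pp m) \<and> \<bar>real b ^ m * t - pp m\<bar> < e'"
    by (rule choice)
  then obtain pp where pp: "\<forall>m. M \<le> m \<longrightarrow> isP U (pp m) \<and> \<bar>real b ^ m * t - pp m\<bar> < e'"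
    by (elim exE)
  define e where "e m = real b ^ m * t - pp m" for m
  have step: "e (Suc m) = real b * e m" if "M \<le> m" for m
  proof -
    have P1: "isP U (pp m)" "isP U (pp (Suc m))" using pp that by auto
    have d: "isP U (real b * pp m - pp (Suc m))" by (intro isP_diff isP_nat_mult P1)
    have "real b * pp m - pp (Suc m) = e (Suc m) - real b * e m" unfolding e_def by (simp add: algebra_simps)
    moreover have em1: "\<bar>e (Suc m)\<bar> < e'"
    proof -
      have Ms: "M \<le> Suc m" using that by simp
      show ?thesis using conjunct2[OF pp[rule_format, OF Ms]] unfolding e_def .
    qed
    moreover have em0: "\<bar>e m\<bar> < e'" using conjunct2[OF pp[rule_format, OF that]] unfolding e_def .
    moreover have "\<bar>e (Suc m) - real b * e m\<bar> \<le> \<bar>e (Suc m)\<bar> + \<bar>real b * e m\<bar>"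
      by (rule abs_triangle_ineq4)
    moreover have "\<bar>real b * e m\<bar> = real b * \<bar>e m\<bar>" by (simp add: abs_mult)
    moreover have "real b * \<bar>e m\<bar> \<le> real b * e'" using em0 by (intro mult_left_mono) auto
    ultimately have "\<bar>real b * pp m - pp (Suc m)\<bar> \<le> (real b + 1) * e'"
      by (simp only: distrib_right mult_1_left)
    then have "\<bar>real b * pp m - pp (Suc m)\<bar> < \<epsilon>" using e'b by linarith
    then have "real b * pp m - pp (Suc m) = 0" using sep d by (meson not_le)
    then show ?thesis using \<open>real b * pp m - pp (Suc m) = e (Suc m) - real b * e m\<close> by simp
  qed
  have eM: "e (M + j) = real b ^ j * e M" for j
  proof (induction j)
    case 0 then show ?case by simp
  next
    case (Suc j)
    have "e (M + Suc j) = real b * e (M + j)" using step[of "M + j"] by simp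
    then show ?case using Suc by simp
  qed
  have "e M = 0"
  proof (rule ccontr)
    assume ne: "e M \<noteq> 0"
    obtain j where j: "e' / \<bar>e M\<bar> < real b ^ j" using real_arch_pow[of "real b"] b by fastforce
    have c1: "e' < real b ^ j * \<bar>e M\<bar>" using j ne by (simp add: field_simps)
    have c2: "real b ^ j * \<bar>e M\<bar> = \<bar>e (M + j)\<bar>" unfolding eM by (simp add: abs_mult)
    have Mj: "M \<le> M + j" by simp
    have c3: "\<bar>e (M + j)\<bar> < e'" using conjunct2[OF pp[rule_format, OF Mj]] unfolding e_def .
    show False using c1 c2 c3 by linarith
  qed
  then have "real b ^ M * t = pp M" unfolding e_def by simp
  moreover have "pp M \<in> \<rat>" using period_rat[OF per eps sep] conjunct1[OF pp[rule_format, OF order.refl]] by blast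
  ultimately have "real b ^ M * t \<in> \<rat>" by simp
  moreover have "real b ^ M \<noteq> 0" using b by simp
  ultimately have "(real b ^ M * t) / real b ^ M \<in> \<rat>"
    by (intro Rats_divide) (auto simp: of_nat_power[symmetric] simp del: of_nat_power)
  then show ?thesis using b by simp
qed



lemma C2_lip:
  assumes C: "C_k 2 g" and per: "\<forall>x. g (x + 1) = g x"
  shows "\<exists>K. \<forall>x y. \<bar>g x - g y\<bar> \<le> K * \<bar>x - y\<bar>"
proof -
  obtain D where D0: "D 0 = g" and Dd: "\<forall>i<2. \<forall>x. (D i has_real_derivative D (Suc i) x) (at x)"
    using C unfolding C_k_def by blast
  have d0: "(g has_real_derivative D 1 x) (at x)" for x using Dd D0 by fastforce
  have d1: "(D 1 has_real_derivative D 2 x) (at x)" for x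
  proof -
    have "(D (Suc 0) has_real_derivative D (Suc (Suc 0)) x) (at x)" using Dd by simp
    then show ?thesis by (simp add: numeral_2_eq_2)
  qed
  have ic: "isCont (D 1) x" for x by (rule DERIV_isCont[OF d1])
  have "continuous_on {0..1} (D 1)" by (intro continuous_at_imp_continuous_on ballI ic)
  then have "bounded (D 1 ` {0..1})" by (intro compact_imp_bounded compact_continuous_image compact_Icc)
  then obtain M where M: "\<forall>z\<in>D 1 ` {0..1}. norm z \<le> M" unfolding bounded_iff by blast
  have Dper: "D 1 (x + 1) = D 1 x" for x
  proof -
    have "((\<lambda>x. g (x + 1)) has_real_derivative D 1 (x + 1)) (at x)"
      using d0[of "x + 1"] DERIV_shift by blast
    moreover have "(\<lambda>x. g (x + 1)) = g" using per by auto
    ultimately have "(g has_real_derivative D 1 (x + 1)) (at x)" by simp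
    then show ?thesis using d0[of x] DERIV_unique by blast
  qed
  have Mb: "\<bar>D 1 x\<bar> \<le> M" for x
  proof -
    have "D 1 x = D 1 ((x - of_int \<lfloor>x\<rfloor>) + of_int \<lfloor>x\<rfloor>)" by simp
    also have "\<dots> = D 1 (x - of_int \<lfloor>x\<rfloor>)" by (rule per_int) (use Dper in blast)
    finally have e: "D 1 x = D 1 (x - of_int \<lfloor>x\<rfloor>)" .
    have "x - of_int \<lfloor>x\<rfloor> \<in> {0..1}" by simp linarith
    then show ?thesis using M unfolding e by auto
  qed
  have mv: "\<bar>g y - g x\<bar> \<le> M * \<bar>y - x\<bar>" if xy: "x < y" for x y
  proof -
    obtain z where "x < z" "z < y" "g y - g x = (y - x) * D 1 z"
      using MVT2[OF xy, of g "D 1"] d0 by blast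
    then have "\<bar>g y - g x\<bar> = \<bar>y - x\<bar> * \<bar>D 1 z\<bar>" by (simp add: abs_mult)
    also have "\<dots> \<le> \<bar>y - x\<bar> * M" by (intro mult_left_mono Mb) simp
    finally show ?thesis by (simp add: mult.commute)
  qed
  have "\<forall>x y. \<bar>g x - g y\<bar> \<le> M * \<bar>x - y\<bar>"
  proof (intro allI)
    fix x y :: real
    consider "x < y" | "x = y" | "y < x" by linarith
    then show "\<bar>g x - g y\<bar> \<le> M * \<bar>x - y\<bar>"
    proof cases
      case 1 then show ?thesis using mv[OF 1] by (simp add: abs_minus_commute)
    next
      case 2 then show ?thesis using Mb[of x] by simp
    next
      case 3 then show ?thesis using mv[OF 3] by simp
    qed
  qed
  then show ?thesis by blast
qed

context WS begin

lemma sepU: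
  assumes nl: "\<not> (\<exists>L. L-lipschitz_on UNIV W)"
  shows "\<exists>\<epsilon>>0. \<forall>p. isP U p \<longrightarrow> p \<noteq> 0 \<longrightarrow> \<epsilon> \<le> \<bar>p\<bar>"
proof (rule ccontr)
  assume "\<not> ?thesis"
  then have small: "\<forall>\<epsilon>>0. \<exists>p. isP U p \<and> p \<noteq> 0 \<and> \<bar>p\<bar> < \<epsilon>" by (auto simp: not_le)
  have Uper: "\<forall>x. U (x + 1) = U x" using U_per by blast
  have ic: "isCont U x" for x using U_cont continuous_on_eq_continuous_at[OF open_UNIV] by blast
  have const: "U y = U 0" for y
  proof (rule ccontr)
    assume ne: "U y \<noteq> U 0"
    define e where "e = \<bar>U y - U 0\<bar>"
    have e0: "e > 0" using ne unfolding e_def by simp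
    obtain d where d: "d > 0" "\<forall>z. z \<noteq> 0 \<and> norm (z - 0) < d \<longrightarrow> norm (U z - U 0) < e"
      using ic[of 0] e0 unfolding isCont_def LIM_eq by blast
    obtain p where p: "isP U p" "p \<noteq> 0" "\<bar>p\<bar> < d" using small d(1) by blast
    define q where "q = \<bar>p\<bar>"
    have q: "isP U q" "q > 0" "q < d"
    proof -
      show "isP U q"
      proof (cases "p \<ge> 0")
        case True then show ?thesis using p(1) unfolding q_def by simp
      next
        case False
        have "q = 0 - p" unfolding q_def using False by simp
        then show ?thesis using isP_diff[OF isP_0 p(1)] by simp
      qed
      show "q > 0" "q < d" using p unfolding q_def by auto
    qed
    define n where "n = \<lfloor>y / q\<rfloor>"
    define z where "z = y - of_int n * q"
    have z1: "0 \<le> z" "z < q"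
    proof -
      have "of_int n \<le> y / q" "y / q < of_int n + 1" unfolding n_def by simp_all
      then show "0 \<le> z" "z < q" unfolding z_def using q(2) by (simp_all add: field_simps)
    qed
    have "U y = U (z + of_int n * q)" unfolding z_def by simp
    also have "\<dots> = U z" using isP_int_mult[OF q(1), of n] unfolding isP_def by blast
    finally have Uy: "U y = U z" .
    show False
    proof (cases "z = 0")
      case True then show False using Uy ne by simp
    next
      case False
      then have "norm (U z - U 0) < e" using d(2) z1 q(3) by auto
      then show False using Uy unfolding e_def by simp
    qed
  qed
  have "LR-lipschitz_on UNIV W"
  proof (rule lipschitz_onI)
    fix x y :: real
    have "W x - W y = -(Rf x - Rf y)" using const[of x] const[of y] unfolding U_def by simp
    then show "dist (W x) (W y) \<le> LR * dist x y" using R_lip[of x y] by (simp add: dist_real_def)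
  qed (rule LR0)
  then show False using nl by blast
qed

end

theorem mainTheorem6:
  fixes \<phi> :: "real \<Rightarrow> real" and lam :: real and b :: nat
  assumes "b \<ge> 2"
    and "1 / real b < lam" and "lam < 1"
    and "\<forall>x. \<phi> (x + 1) = \<phi> x"
    and "\<exists>L. L-lipschitz_on UNIV \<phi>"
    and "\<not> (\<exists>L. L-lipschitz_on UNIV (weierstrass_fun \<phi> lam b))"
    and "regulating_period 2 (weierstrass_fun \<phi> lam b) t"
  shows "t \<in> \<rat>"
proof -
  obtain Lp where Lp: "Lp-lipschitz_on UNIV \<phi>" using assms(5) by blast
  interpret WS \<phi> lam b Lp using assms(1-4) Lp by unfold_locales auto
  have gper: "\<forall>x. (\<lambda>x. W (x + t) - W x) (x + 1) = (\<lambda>x. W (x + t) - W x) x"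
  proof
    fix x
    have e: "x + 1 + t = (x + t) + 1" by simp
    show "(\<lambda>x. W (x + t) - W x) (x + 1) = (\<lambda>x. W (x + t) - W x) x"
      unfolding e W_per by (rule refl)
  qed
  obtain K where K: "\<forall>x y. \<bar>(W (x + t) - W x) - (W (y + t) - W y)\<bar> \<le> K * \<bar>x - y\<bar>"
    using C2_lip[OF assms(7)[unfolded regulating_period_def] gper] by blast
  obtain \<epsilon> where eps: "\<epsilon> > 0" "\<forall>p. isP U p \<longrightarrow> p \<noteq> 0 \<longrightarrow> \<epsilon> \<le> \<bar>p\<bar>"
    using sepU[OF assms(6)] by blast
  have small: "\<forall>m y. \<bar>U (y + real b ^ m * t) - U y\<bar> \<le> (2 * (K + 2 * LR)) * r ^ m"
    using main_est[OF K] by (simp only: mult.assoc) blast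
  show ?thesis
    by (rule final[OF U_cont _ eps small r_pos r_lt1 assms(1)]) (use U_per in blast)
qed


end
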